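(* Let $d\ge1$, $p\ge1$, $\Sigma\in\mathbb{R}^{d\times d}$ positive definite, and let $\eta,\zeta$ be mutually absolutely continuous probability distributions on $\mathbb{R}^d$ with $\mathrm{SKL}(\zeta,\eta)<\infty$. If at least one of $\eta$, $\zeta$ is $(p,\Sigma)$-exponentially controlled, then $$W_{p,\Sigma}(\eta,\zeta) \le (3+d)\left[\mathrm{SKL}(\zeta,\eta)^{1/p} + \{\mathrm{SKL}(\zeta,\eta)/2\}^{1/(2p)}\right].$$
   Context: $\mathrm{KL}(\zeta\|\eta)=\int\log(d\zeta/d\eta)\,d\zeta$; the symmetrized KL divergence is $\mathrm{SKL}(\zeta,\eta) := \mathrm{KL}(\zeta\|\eta)+\mathrm{KL}(\eta\|\zeta)$. The $(p,\Sigma)$-Wasserstein distance is $W_{p,\Sigma}(\eta,\zeta) := \inf_{\omega}\left\{\int \|\Sigma^{-1/2}(\theta-\theta')\|_2^p\,\omega(d\theta,d\theta')\right\}^{1/p}$, infimum over couplings $\omega$ of $\eta$ and $\zeta$; it is symmetric in its arguments. A distribution $\eta$ on $\mathbb{R}^d$ is $(p,\Sigma)$-exponentially controlled if $\inf_{\theta'\in\mathbb{R}^d}\log\int e^{\|\Sigma^{-1/2}(\theta-\theta')\|_2^p}\,\eta(d\theta)\le d/2$. *)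

theory Defs
  imports "HOL-Probability.Probability"
begin

definition pos_def_mat :: "real^'n^'n \<Rightarrow> bool" where
  "pos_def_mat S \<longleftrightarrow> transpose S = S \<and> (\<forall>x. x \<noteq> 0 \<longrightarrow> x \<bullet> (S *v x) > 0)"

definition inv_sqrt_mat :: "real^'n^'n \<Rightarrow> real^'n^'n" where
  "inv_sqrt_mat S = (SOME A. pos_def_mat A \<and> A ** A = matrix_inv S)"

text \<open>KL(zeta || eta) = integral of log(d zeta / d eta) d zeta (natural logarithm).\<close>
definition KL :: "'a measure \<Rightarrow> 'a measure \<Rightarrow> real" where
  "KL \<zeta> \<eta> = KL_divergence (exp 1) \<eta> \<zeta>"

definition KL_finite :: "'a measure \<Rightarrow> 'a measure \<Rightarrow> bool" where
  "KL_finite \<zeta> \<eta> \<longleftrightarrow> integrable \<zeta> (entropy_density (exp 1) \<eta> \<zeta>)"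

definition SKL :: "'a measure \<Rightarrow> 'a measure \<Rightarrow> real" where
  "SKL \<zeta> \<eta> = KL \<zeta> \<eta> + KL \<eta> \<zeta>"

definition couplings :: "(real^'n) measure \<Rightarrow> (real^'n) measure \<Rightarrow> ((real^'n) \<times> (real^'n)) measure set" where
  "couplings \<eta> \<zeta> = {\<omega>. prob_space \<omega> \<and> sets \<omega> = sets (borel \<Otimes>\<^sub>M borel)
      \<and> distr \<omega> borel fst = \<eta> \<and> distr \<omega> borel snd = \<zeta>}"

definition wasserstein_pow :: "real \<Rightarrow> real^'n^'n \<Rightarrow> (real^'n) measure \<Rightarrow> (real^'n) measure \<Rightarrow> ennreal" where
  "wasserstein_pow p S \<eta> \<zeta> = (INF \<omega> \<in> couplings \<eta> \<zeta>.
      \<integral>\<^sup>+ z. ennreal (norm (inv_sqrt_mat S *v (fst z - snd z)) powr p) \<partial>\<omega>)"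

definition wasserstein :: "real \<Rightarrow> real^'n^'n \<Rightarrow> (real^'n) measure \<Rightarrow> (real^'n) measure \<Rightarrow> ennreal" where
  "wasserstein p S \<eta> \<zeta> = (if wasserstein_pow p S \<eta> \<zeta> = \<infinity> then \<infinity>
      else ennreal (enn2real (wasserstein_pow p S \<eta> \<zeta>) powr (1 / p)))"

text \<open>(p,Sigma)-exponential control: inf over theta' of log of the (possibly infinite)
  integral is at most d/2; written equivalently with exp applied to both sides.\<close>
definition exp_controlled :: "real \<Rightarrow> real^'n^'n \<Rightarrow> (real^'n) measure \<Rightarrow> bool" where
  "exp_controlled p S \<eta> \<longleftrightarrow>
     (INF \<theta>'. \<integral>\<^sup>+ \<theta>. ennreal (exp (norm (inv_sqrt_mat S *v (\<theta> - \<theta>')) powr p)) \<partial>\<eta>)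
       \<le> ennreal (exp (real CARD('n) / 2))"

end

theory Submission
  imports Defs
begin

lemma young_pt:
  fixes s x :: real assumes s: "0 \<le> s" and x: "0 < x"
  shows "s * \<bar>x - 1\<bar> \<le> (x - 1) * ln x + s^2/4 * exp s"
proof (cases "x \<ge> 1")
  case True
  define w where "w = ln x"
  have w0: "0 \<le> w" using True w_def by simp
  have xw: "x = exp w" using x w_def by simp
  have x1: "x - 1 \<le> w * x"
  proof -
    have "ln (1/x) \<le> 1/x - 1" using x by (intro ln_le_minus_one) auto
    then have "1 - 1/x \<le> ln x" using x by (simp add: ln_div)
    then show ?thesis using x w_def by (simp add: field_simps)
  qed
  have e: "exp w \<le> exp s \<or> s \<le> w" by auto
  show ?thesis
  proof (cases "s \<le> w")
    case True
    have "s * (x - 1) \<le> (x - 1) * w" using True \<open>1 \<le> x\<close> by (simp add: mult_right_mono mult.commute)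
    moreover have "0 \<le> s^2/4 * exp s" by simp
    moreover have "s * \<bar>x - 1\<bar> = s * (x - 1)" using \<open>1 \<le> x\<close> by simp
    ultimately show ?thesis unfolding w_def by linarith
  next
    case False
    have "(x - 1) * (s - w) \<le> (w * x) * (s - w)" using x1 False by (intro mult_right_mono) auto
    also have "\<dots> = w * (s - w) * exp w" using xw by simp
    also have "\<dots> \<le> w * (s - w) * exp s" using False w0 by (intro mult_left_mono) auto
    also have "\<dots> \<le> s^2/4 * exp s"
    proof -
      have "w * (s - w) \<le> s^2/4"
      proof -
        have "0 \<le> (s - 2 * w) * (s - 2 * w)" by simp
        then show ?thesis by (simp add: power2_eq_square algebra_simps)
      qed
      then show ?thesis by (intro mult_right_mono) auto
    qed
    finally show ?thesis using \<open>1 \<le> x\<close> w_def by (simp add: algebra_simps)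
  qed
next
  case False
  define v where "v = 1 - x"
  have v: "0 < v" "v < 1" using False x v_def by auto
  have "ln x \<le> x - 1" using x ln_le_minus_one by simp
  have "v * v \<le> (x - 1) * ln x"
  proof -
    have "(x - 1) * ln x = v * (- ln x)" unfolding v_def by (simp add: algebra_simps)
    moreover have "v \<le> - ln x" using \<open>ln x \<le> x - 1\<close> v_def by simp
    moreover have "v * v \<le> v * (- ln x)" using v \<open>v \<le> - ln x\<close> by (intro mult_left_mono) auto
    ultimately show ?thesis by linarith
  qed
  moreover have "s * v \<le> v * v + s^2/4"
  proof -
    have "0 \<le> (s - 2 * v) * (s - 2 * v)" by simp
    then show ?thesis by (simp add: power2_eq_square algebra_simps)
  qed
  moreover have "s^2/4 \<le> s^2/4 * exp s"
  proof -
    have "1 \<le> exp s" using s by simp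
    then have "s^2/4 * 1 \<le> s^2/4 * exp s" by (intro mult_left_mono) auto
    then show ?thesis by simp
  qed
  ultimately show ?thesis using False v_def by (simp add: abs_if)
qed


lemma regimes:
  fixes J S K a :: real
  assumes S: "0 \<le> S" and K: "0 \<le> K" "K \<le> a^2/8" and a: "0 < a"
    and H: "\<And>l. 0 < l \<Longrightarrow> l \<le> 1/a \<Longrightarrow> J \<le> S/l + l*K"
  shows "J \<le> a*(S + sqrt(S/2))"
proof (cases "S = 0")
  case True
  have "J \<le> 0"
  proof (rule ccontr)
    assume "\<not> J \<le> 0"
    hence J0: "0 < J" by simp
    define l where "l = min (1/a) (J/(2*(K+1)))"
    have l: "0 < l" "l \<le> 1/a" using J0 a K unfolding l_def by auto
    have "J \<le> l*K" using H[OF l] True by simp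
    also have "\<dots> \<le> (J/(2*(K+1))) * K" using l K unfolding l_def by (intro mult_right_mono) auto
    also have "\<dots> < J"
    proof -
      have "K/(2*(K+1)) < 1" using K by simp
      hence "J * (K/(2*(K+1))) < J * 1" using J0 by (intro mult_strict_left_mono) auto
      moreover have "(J/(2*(K+1))) * K = J * (K/(2*(K+1)))" by simp
      ultimately show ?thesis by simp
    qed
    finally show False by simp
  qed
  then show ?thesis using True by simp
next
  case False
  hence S0: "0 < S" using S by simp
  define r where "r = sqrt S"
  have r: "0 < r" "r*r = S" using S0 unfolding r_def by (auto simp: real_sqrt_mult_self)
  have s2: "sqrt (S/2) = r / sqrt 2" unfolding r_def by (simp add: real_sqrt_divide)
  have sq2: "sqrt 2 * sqrt 2 = 2" by simp
  have sq2p: "0 < sqrt 2" by simp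
  define c where "c = 2 * sqrt 2 / a"
  have c0: "0 < c" using a unfolding c_def by simp
  have cK: "c * K \<le> a / (2 * sqrt 2)"
  proof -
    have "c * K \<le> c * (a^2/8)" using K c0 by (intro mult_left_mono) auto
    also have "\<dots> = a / (2 * sqrt 2)" unfolding c_def using a sq2
      by (simp add: field_simps power2_eq_square)
    finally show ?thesis .
  qed
  have ic: "1 / c = a / (2 * sqrt 2)" unfolding c_def using a by simp
  have half: "a / (2 * sqrt 2) * r = a/2 * sqrt (S/2)" unfolding s2 by (simp add: field_simps)
  show ?thesis
  proof (cases "c * r \<le> 1/a")
    case True
    have "J \<le> S/(c*r) + (c*r)*K" using H[of "c*r"] True c0 r by simp
    also have "S/(c*r) = r * (1/c)" using r c0 by (simp add: field_simps)
    also have "(c*r)*K = r * (c*K)" by simp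
    also have "r * (1/c) + r * (c*K) \<le> r * (a / (2 * sqrt 2)) + r * (a / (2 * sqrt 2))"
      using cK ic r by (intro add_mono mult_left_mono) auto
    also have "\<dots> = a * sqrt (S/2)" using half by (simp add: mult.commute)
    also have "\<dots> \<le> a*(S + sqrt(S/2))" using a S by (simp add: algebra_simps)
    finally show ?thesis .
  next
    case False
    have "J \<le> S/(1/a) + (1/a)*K" using H[of "1/a"] a by simp
    also have "(1/a)*K \<le> (c*r)*K" using False K by (intro mult_right_mono) auto
    also have "(c*r)*K = r * (c*K)" by simp
    also have "r * (c*K) \<le> r * (a / (2 * sqrt 2))" using cK r by (intro mult_left_mono) auto
    also have "\<dots> = a/2 * sqrt (S/2)" using half by (simp add: mult.commute)
    finally have "J \<le> a*S + a/2 * sqrt (S/2)" by (simp add: mult.commute)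
    also have "\<dots> \<le> a*(S + sqrt(S/2))" using a S by (simp add: algebra_simps)
    finally show ?thesis .
  qed
qed


lemma sq_exp_bound:
  fixes g b :: real assumes g: "0 \<le> g" and b: "0 < b"
  shows "g^2 \<le> (2/(b * exp 1))^2 * exp (b * g)"
proof -
  have "b*g/2 \<le> exp (b*g/2 - 1)" using exp_ge_add_one_self[of "b*g/2 - 1"] by simp
  also have "\<dots> = exp (b*g/2) / exp 1" by (simp add: exp_diff)
  finally have "g \<le> (2/(b * exp 1)) * exp (b*g/2)" using b by (simp add: field_simps)
  hence "g^2 \<le> ((2/(b * exp 1)) * exp (b*g/2))^2" using g by (intro power_mono) auto
  also have "\<dots> = (2/(b * exp 1))^2 * exp (b * g)"
    by (simp add: power_mult_distrib power2_eq_square exp_add[symmetric])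
  finally show ?thesis .
qed

lemma nn_int_lin_bound:
  fixes M :: "'a measure" and h k :: "'a \<Rightarrow> real"
  assumes P: "prob_space M" and km: "k \<in> borel_measurable M"
    and pt: "\<And>x. h x \<le> C1 + C2 * exp (k x)" and C: "0 \<le> C1" "0 \<le> C2"
    and Z: "(\<integral>\<^sup>+x. ennreal (exp (k x)) \<partial>M) \<le> ennreal Zb" and Zb: "0 \<le> Zb"
  shows "(\<integral>\<^sup>+x. ennreal (h x) \<partial>M) \<le> ennreal (C1 + C2 * Zb)"
proof -
  interpret prob_space M by fact
  have "(\<integral>\<^sup>+x. ennreal (h x) \<partial>M) \<le> (\<integral>\<^sup>+x. ennreal C1 + ennreal C2 * ennreal (exp (k x)) \<partial>M)"
    using pt C by (intro nn_integral_mono) (simp add: ennreal_plus[symmetric] ennreal_mult[symmetric] ennreal_leI del: ennreal_plus)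
  also have "\<dots> = ennreal C1 + ennreal C2 * (\<integral>\<^sup>+x. ennreal (exp (k x)) \<partial>M)"
    using km by (subst nn_integral_add) (auto simp: nn_integral_cmult emeasure_space_1)
  also have "\<dots> \<le> ennreal C1 + ennreal C2 * ennreal Zb"
    using Z by (intro add_mono mult_left_mono) auto
  also have "\<dots> \<le> ennreal (C1 + C2 * Zb)"
    using C Zb by (simp add: ennreal_plus[symmetric] ennreal_mult[symmetric] del: ennreal_plus)
  finally show ?thesis .
qed

lemma mom_bound:
  fixes M :: "'a measure" and g :: "'a \<Rightarrow> real" and d :: nat
  assumes P: "prob_space M" and gm: "g \<in> borel_measurable M" and g0: "\<And>x. 0 \<le> g x" and d1: "1 \<le> d"
   and Z: "(\<integral>\<^sup>+x. ennreal (exp (g x)) \<partial>M) \<le> ennreal (11/10 * exp (real d/2))"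
  shows "(\<integral>\<^sup>+x. ennreal ((g x)^2 * exp (g x / (3 + real d))) \<partial>M) \<le> ennreal ((3 + real d)^2/2)"
proof -
  define a where "a = 3 + real d"
  have a4: "4 \<le> a" using d1 unfolding a_def by simp
  have e0: "0 < exp (1::real)" by simp
  show ?thesis
  proof (cases "d \<le> 4")
    case True
    define C where "C = (2/((3/4) * exp (1::real)))^2"
    have pt: "(g x)^2 * exp (g x / a) \<le> 0 + C * exp (g x)" for x
    proof -
      have "(g x)^2 * exp (g x / a) \<le> (C * exp (3/4 * g x)) * exp (g x / a)"
        using sq_exp_bound[OF g0[of x], of "3/4"] unfolding C_def by (intro mult_right_mono) auto
      also have "\<dots> = C * exp ((3/4 + 1/a) * g x)" by (simp add: exp_add[symmetric] algebra_simps)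
      also have "\<dots> \<le> C * exp (g x)"
      proof -
        have "(3/4 + 1/a) * g x \<le> 1 * g x" using a4 g0[of x] by (intro mult_right_mono) (auto simp: field_simps)
        then show ?thesis unfolding C_def by (intro mult_left_mono) auto
      qed
      finally show ?thesis by simp
    qed
    have "(\<integral>\<^sup>+x. ennreal ((g x)^2 * exp (g x / a)) \<partial>M) \<le> ennreal (0 + C * (11/10 * exp (real d/2)))"
      by (rule nn_int_lin_bound[OF P gm pt _ _ Z _]) (auto simp: C_def)
    also have "\<dots> \<le> ennreal (a^2/2)"
    proof (intro ennreal_leI)
      have "exp (real d/2) \<le> exp 2" using True by simp
      hence "C * (11/10 * exp (real d/2)) \<le> C * (11/10 * exp 2)" unfolding C_def by (intro mult_left_mono) auto
      also have "\<dots> = 64 * 11 / 90 * (exp 2 / (exp 1)^2)" unfolding C_def by (simp add: field_simps power2_eq_square)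
      also have "exp 2 / (exp 1)^2 = (1::real)" by (simp add: power2_eq_square exp_add[symmetric])
      also have "64 * 11 / 90 * 1 \<le> a^2/2"
      proof -
        have "4^2 \<le> a^2" using a4 by (intro power_mono) auto
        then show ?thesis by simp
      qed
      finally show "0 + C * (11/10 * exp (real d/2)) \<le> a^2/2" by simp
    qed
    finally show ?thesis unfolding a_def .
  next
    case False
    hence d5: "5 \<le> d" by simp
    define L where "L = real d / 2"
    define b where "b = 2 / L"
    define th where "th = b + 1/a"
    have L: "5/2 \<le> L" using d5 unfolding L_def by simp
    have th1: "th \<le> 1" "0 \<le> th"
    proof -
      have "b \<le> 4/5" using L unfolding b_def by (simp add: field_simps)
      moreover have "1/a \<le> 1/8" using d5 unfolding a_def by (simp add: field_simps)
      moreover have "0 < 1/a" "0 < b" using a4 L unfolding b_def by auto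
      ultimately show "th \<le> 1" "0 \<le> th" unfolding th_def by linarith+
    qed
    define C where "C = (2/(b * exp (1::real)))^2"
    have C: "C = (L / exp 1)^2" unfolding C_def b_def using L by (simp add: field_simps)
    have pt: "(g x)^2 * exp (g x / a) \<le> C * exp (th*L) * (1 - th) + (C * exp (th*L) * th / exp L) * exp (g x)" for x
    proof -
      have "(g x)^2 * exp (g x / a) \<le> (C * exp (b * g x)) * exp (g x / a)"
        using sq_exp_bound[OF g0[of x], of b] L unfolding C_def b_def by (intro mult_right_mono) auto
      also have "\<dots> = C * exp (th * g x)" unfolding th_def by (simp add: exp_add[symmetric] algebra_simps)
      also have "\<dots> = C * (exp (th*L) * exp ((1 - th) * 0 + th * (g x - L)))" by (simp add: exp_add[symmetric] algebra_simps)
      also have "exp ((1 - th) * 0 + th * (g x - L)) \<le> (1 - th) * exp 0 + th * exp (g x - L)"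
        using convex_onD[OF exp_convex, of th 0 "g x - L"] th1 by simp
      hence "C * (exp (th*L) * exp ((1 - th) * 0 + th * (g x - L))) \<le> C * (exp (th*L) * ((1 - th) * exp 0 + th * exp (g x - L)))"
        unfolding C_def by (intro mult_left_mono) auto
      also have "\<dots> = C * exp (th*L) * (1 - th) + (C * exp (th*L) * th / exp L) * exp (g x)"
        by (simp add: exp_diff field_simps)
      finally show ?thesis .
    qed
    have "(\<integral>\<^sup>+x. ennreal ((g x)^2 * exp (g x / a)) \<partial>M) \<le>
       ennreal (C * exp (th*L) * (1 - th) + (C * exp (th*L) * th / exp L) * (11/10 * exp (real d/2)))"
      by (rule nn_int_lin_bound[OF P gm pt _ _ Z _]) (use th1 in \<open>auto simp: C_def\<close>)
    also have "\<dots> \<le> ennreal (a^2/2)"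
    proof (intro ennreal_leI)
      have eL: "exp (real d / 2) = exp L" unfolding L_def ..
      have thL: "th * L = 2 + L/a" unfolding th_def b_def using L by (simp add: field_simps)
      have "C * exp (th*L) * (1 - th) + (C * exp (th*L) * th / exp L) * (11/10 * exp (real d/2))
          = C * exp (th*L) * (1 + th/10)" unfolding eL by (simp add: field_simps)
      also have "\<dots> \<le> C * exp (th*L) * (11/10)" using th1 unfolding C_def by (intro mult_left_mono) auto
      also have "\<dots> = C * exp (2 + L/a) * (11/10)" using thL by simp
      also have "C * exp (2 + L/a) * (11/10) = L^2 * exp (L/a) * (11/10)"
      proof -
        have "exp (2::real) = exp 1 * exp 1" by (simp add: exp_add[symmetric])
        then show ?thesis unfolding C by (simp add: exp_add power2_eq_square field_simps)
      qed
      also have "\<dots> \<le> L^2 * (165/100) * (11/10)"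
      proof -
        have "L/a \<le> 1/2" unfolding a_def L_def by (simp add: field_simps)
        hence "exp (L/a) \<le> exp (1/2)" by simp
        also have "exp (1/2) \<le> (165/100::real)"
        proof -
          have "exp (1/2) * exp (1/2) = exp (1::real)" by (simp add: exp_add[symmetric])
          also have "\<dots> < 272/100" by (rule e_less_272)
          finally have "exp (1/2) * exp (1/2) < (165/100::real) * (165/100)" by simp
          hence "(exp (1/2))^2 < (165/100::real)^2" by (simp add: power2_eq_square)
          hence "exp (1/2) < (165/100::real)" by (rule power_less_imp_less_base) auto
          then show ?thesis by simp
        qed
        finally show ?thesis by (intro mult_right_mono mult_left_mono) auto
      qed
      also have "\<dots> \<le> a^2/2" unfolding a_def L_def using d5 by (simp add: power2_eq_square field_simps)
      finally show "C * exp (th*L) * (1 - th) + (C * exp (th*L) * th / exp L) * (11/10 * exp (real d/2)) \<le> a^2/2" .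
    qed
    finally show ?thesis unfolding a_def .
  qed
qed


definition cT :: "bool \<times> ('a \<times> 'a) \<Rightarrow> 'a \<times> 'a" where
  "cT z = (if fst z then (fst (snd z), fst (snd z)) else snd z)"

definition ck :: "('a \<Rightarrow> ennreal) \<Rightarrow> ('a \<Rightarrow> ennreal) \<Rightarrow> ('a \<Rightarrow> ennreal) \<Rightarrow> bool \<times> ('a \<times> 'a) \<Rightarrow> ennreal" where
  "ck M0 Q1 Q2 z = (if fst z then M0 (fst (snd z)) else Q1 (fst (snd z)) * Q2 (snd (snd z)))"

definition cpl :: "'a measure \<Rightarrow> ('a \<Rightarrow> ennreal) \<Rightarrow> ('a \<Rightarrow> ennreal) \<Rightarrow> ('a \<Rightarrow> ennreal) \<Rightarrow> ('a::topological_space \<times> 'a) measure" where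
  "cpl \<rho> M0 Q1 Q2 = distr (density (count_space UNIV \<Otimes>\<^sub>M (\<rho> \<Otimes>\<^sub>M \<rho>)) (ck M0 Q1 Q2)) (borel \<Otimes>\<^sub>M borel) cT"

lemma cT_meas:
  assumes S: "sets \<rho> = sets (borel :: 'a::topological_space measure)"
  shows "cT \<in> measurable (count_space UNIV \<Otimes>\<^sub>M (\<rho> \<Otimes>\<^sub>M \<rho>)) (borel \<Otimes>\<^sub>M (borel :: 'a measure))"
proof -
  note S[measurable_cong]
  have "(\<lambda>z. if fst z then (fst (snd z), fst (snd z)) else snd z) \<in> measurable (count_space UNIV \<Otimes>\<^sub>M (\<rho> \<Otimes>\<^sub>M \<rho>)) (borel \<Otimes>\<^sub>M (borel :: 'a measure))"
    by measurable
  then show ?thesis unfolding cT_def[abs_def] .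
qed

lemma ck_meas:
  assumes S: "sets \<rho> = sets (borel :: 'a::topological_space measure)"
    and [measurable]: "M0 \<in> borel_measurable borel" "Q1 \<in> borel_measurable borel" "Q2 \<in> borel_measurable borel"
  shows "ck M0 Q1 Q2 \<in> borel_measurable (count_space UNIV \<Otimes>\<^sub>M (\<rho> \<Otimes>\<^sub>M \<rho>))"
proof -
  note S[measurable_cong]
  have "(\<lambda>z. if fst z then M0 (fst (snd z)) else Q1 (fst (snd z)) * Q2 (snd (snd z))) \<in> borel_measurable (count_space UNIV \<Otimes>\<^sub>M (\<rho> \<Otimes>\<^sub>M \<rho>))"
    by measurable
  then show ?thesis unfolding ck_def[abs_def] .
qed

lemma master:
  assumes P: "prob_space \<rho>" and S: "sets \<rho> = sets (borel :: 'a::topological_space measure)"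
    and [measurable]: "M0 \<in> borel_measurable borel" "Q1 \<in> borel_measurable borel" "Q2 \<in> borel_measurable borel"
    and h[measurable]: "h \<in> borel_measurable (borel \<Otimes>\<^sub>M (borel :: 'a measure))"
  shows "(\<integral>\<^sup>+z. h z \<partial>cpl \<rho> M0 Q1 Q2) = (\<integral>\<^sup>+x. M0 x * h (x, x) \<partial>\<rho>) + (\<integral>\<^sup>+x. \<integral>\<^sup>+y. Q1 x * Q2 y * h (x, y) \<partial>\<rho> \<partial>\<rho>)"
proof -
  note S[measurable_cong]
  interpret rho: prob_space \<rho> by fact
  interpret rr: pair_prob_space \<rho> \<rho> by unfold_locales
  have sfr: "sigma_finite_measure (\<rho> \<Otimes>\<^sub>M \<rho>)" using rr.prob_space_axioms by (simp add: prob_space_imp_sigma_finite)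
  note cT_meas[OF S, measurable] ck_meas[OF S, measurable]
  have "(\<integral>\<^sup>+z. h z \<partial>cpl \<rho> M0 Q1 Q2) = (\<integral>\<^sup>+z. ck M0 Q1 Q2 z * h (cT z) \<partial>(count_space UNIV \<Otimes>\<^sub>M (\<rho> \<Otimes>\<^sub>M \<rho>)))"
    unfolding cpl_def by (simp add: nn_integral_distr nn_integral_density)
  also have "\<dots> = (\<integral>\<^sup>+b. \<integral>\<^sup>+w. ck M0 Q1 Q2 (b, w) * h (cT (b, w)) \<partial>(\<rho> \<Otimes>\<^sub>M \<rho>) \<partial>count_space UNIV)"
    by (rule sigma_finite_measure.nn_integral_fst[OF sfr, symmetric]) measurable
  also have "\<dots> = (\<integral>\<^sup>+w. ck M0 Q1 Q2 (True, w) * h (cT (True, w)) \<partial>(\<rho> \<Otimes>\<^sub>M \<rho>)) + (\<integral>\<^sup>+w. ck M0 Q1 Q2 (False, w) * h (cT (False, w)) \<partial>(\<rho> \<Otimes>\<^sub>M \<rho>))"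
    by (simp add: nn_integral_count_space_finite UNIV_bool add.commute)
  also have "(\<integral>\<^sup>+w. ck M0 Q1 Q2 (True, w) * h (cT (True, w)) \<partial>(\<rho> \<Otimes>\<^sub>M \<rho>)) = (\<integral>\<^sup>+x. \<integral>\<^sup>+y. M0 x * h (x, x) \<partial>\<rho> \<partial>\<rho>)"
    unfolding ck_def cT_def by (subst rho.nn_integral_fst[symmetric]) (auto simp: split_beta')
  also have "\<dots> = (\<integral>\<^sup>+x. M0 x * h (x, x) \<partial>\<rho>)" by (simp add: rho.emeasure_space_1)
  also have "(\<integral>\<^sup>+w. ck M0 Q1 Q2 (False, w) * h (cT (False, w)) \<partial>(\<rho> \<Otimes>\<^sub>M \<rho>)) = (\<integral>\<^sup>+x. \<integral>\<^sup>+y. Q1 x * Q2 y * h (x, y) \<partial>\<rho> \<partial>\<rho>)"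
    unfolding ck_def cT_def by (subst rho.nn_integral_fst[symmetric]) (auto simp: split_beta')
  finally show ?thesis .
qed


lemma cpl_sets: "sets (cpl \<rho> M0 Q1 Q2) = sets (borel \<Otimes>\<^sub>M borel)"
  unfolding cpl_def by simp

lemma cpl_space: "space (cpl \<rho> M0 Q1 Q2) = UNIV"
  unfolding cpl_def by (simp add: space_pair_measure)

lemma coupling_main:
  fixes \<rho> :: "'a::topological_space measure" and f1 f2 :: "'a \<Rightarrow> real"
  assumes P: "prob_space \<rho>" and S: "sets \<rho> = sets (borel :: 'a measure)"
    and f1m[measurable]: "f1 \<in> borel_measurable borel" and f2m[measurable]: "f2 \<in> borel_measurable borel"
    and f1p: "\<And>x. 0 \<le> f1 x" and f2p: "\<And>x. 0 \<le> f2 x"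
    and P1: "prob_space (density \<rho> f1)" and P2: "prob_space (density \<rho> f2)"
  defines "a \<equiv> enn2real (\<integral>\<^sup>+x. ennreal (max 0 (f1 x - f2 x)) \<partial>\<rho>)"
  defines "\<omega> \<equiv> cpl \<rho> (\<lambda>x. ennreal (min (f1 x) (f2 x))) (\<lambda>x. ennreal (max 0 (f1 x - f2 x))) (\<lambda>y. ennreal (max 0 (f2 y - f1 y) / a))"
  shows "distr \<omega> borel fst = density \<rho> f1" "distr \<omega> borel snd = density \<rho> f2"
    and "\<And>c g K. case_prod c \<in> borel_measurable (borel \<Otimes>\<^sub>M borel) \<Longrightarrow> (\<And>x. c x x = 0) \<Longrightarrow> 0 \<le> K \<Longrightarrow>
        g \<in> borel_measurable borel \<Longrightarrow> (\<And>x. 0 \<le> g x) \<Longrightarrow> (\<And>x y. 0 \<le> c x y) \<Longrightarrow> (\<And>x y. c x y \<le> K * (g x + g y)) \<Longrightarrow>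
        (\<integral>\<^sup>+z. ennreal (c (fst z) (snd z)) \<partial>\<omega>) \<le> ennreal K * (\<integral>\<^sup>+x. ennreal (g x * \<bar>f1 x - f2 x\<bar>) \<partial>\<rho>)"
proof -
  note S[measurable_cong]
  interpret rho: prob_space \<rho> by fact
  have spr: "space \<rho> = UNIV" using sets_eq_imp_space_eq[OF S] by simp
  define M0 where "M0 = (\<lambda>x. ennreal (min (f1 x) (f2 x)))"
  define P1 where "P1 = (\<lambda>x. ennreal (max 0 (f1 x - f2 x)))"
  define P2 where "P2 = (\<lambda>x. ennreal (max 0 (f2 x - f1 x)))"
  define Q2 where "Q2 = (\<lambda>y. ennreal (max 0 (f2 y - f1 y) / a))"
  have om: "\<omega> = cpl \<rho> M0 P1 Q2" unfolding \<omega>_def M0_def P1_def Q2_def ..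
  have [measurable]: "M0 \<in> borel_measurable borel" "P1 \<in> borel_measurable borel" "P2 \<in> borel_measurable borel" "Q2 \<in> borel_measurable borel"
    unfolding M0_def P1_def P2_def Q2_def by measurable
  have e1: "ennreal (f1 x) = M0 x + P1 x" for x
  proof -
    have h: "f1 x = min (f1 x) (f2 x) + max 0 (f1 x - f2 x)" by (simp add: min_def max_def)
    have "ennreal (f1 x) = ennreal (min (f1 x) (f2 x) + max 0 (f1 x - f2 x))" using h by metis
    also have "\<dots> = M0 x + P1 x" unfolding M0_def P1_def by (rule ennreal_plus) (use f1p[of x] f2p[of x] in auto)
    finally show ?thesis .
  qed
  have e2: "ennreal (f2 x) = M0 x + P2 x" for x
  proof -
    have h: "f2 x = min (f1 x) (f2 x) + max 0 (f2 x - f1 x)" by (simp add: min_def max_def)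
    have "ennreal (f2 x) = ennreal (min (f1 x) (f2 x) + max 0 (f2 x - f1 x))" using h by metis
    also have "\<dots> = M0 x + P2 x" unfolding M0_def P2_def by (rule ennreal_plus) (use f1p[of x] f2p[of x] in auto)
    finally show ?thesis .
  qed
  have tot1: "(\<integral>\<^sup>+x. ennreal (f1 x) \<partial>\<rho>) = 1"
    using prob_space.emeasure_space_1[OF P1] by (simp add: emeasure_density spr)
  have tot2: "(\<integral>\<^sup>+x. ennreal (f2 x) \<partial>\<rho>) = 1"
    using prob_space.emeasure_space_1[OF P2] by (simp add: emeasure_density spr)
  have s1: "(\<integral>\<^sup>+x. M0 x \<partial>\<rho>) + (\<integral>\<^sup>+x. P1 x \<partial>\<rho>) = 1"
    using tot1 unfolding e1 by (subst nn_integral_add[symmetric]) auto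
  have s2: "(\<integral>\<^sup>+x. M0 x \<partial>\<rho>) + (\<integral>\<^sup>+x. P2 x \<partial>\<rho>) = 1"
    using tot2 unfolding e2 by (subst nn_integral_add[symmetric]) auto
  have M0fin: "(\<integral>\<^sup>+x. M0 x \<partial>\<rho>) \<noteq> \<infinity>" using s1 by (intro notI) simp
  have I12: "(\<integral>\<^sup>+x. P1 x \<partial>\<rho>) = (\<integral>\<^sup>+x. P2 x \<partial>\<rho>)"
    using s1 s2 M0fin by (metis ennreal_add_left_cancel)
  have I1fin: "(\<integral>\<^sup>+x. P1 x \<partial>\<rho>) \<noteq> \<infinity>" using s1 by (intro notI) simp
  have I1a: "(\<integral>\<^sup>+x. P1 x \<partial>\<rho>) = ennreal a" unfolding a_def P1_def[symmetric] using I1fin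
    by (simp add: ennreal_enn2real_if)
  have a0: "0 \<le> a" unfolding a_def by simp
  have Q2e: "Q2 y = ennreal (1/a) * P2 y" for y
    unfolding Q2_def P2_def using a0 by (subst ennreal_mult[symmetric]) (auto simp del: ennreal_max_0)
  have Q2int: "(\<integral>\<^sup>+y. Q2 y * h y \<partial>\<rho>) = ennreal (1/a) * (\<integral>\<^sup>+y. P2 y * h y \<partial>\<rho>)" if [measurable]: "h \<in> borel_measurable borel" for h
    unfolding Q2e by (subst nn_integral_cmult[symmetric]) (auto simp: mult.assoc)
  have Q2tot_pos: "(\<integral>\<^sup>+y. Q2 y \<partial>\<rho>) = 1" if "0 < a"
  proof -
    have "(\<integral>\<^sup>+y. Q2 y \<partial>\<rho>) = ennreal (1/a) * ennreal a" using Q2int[of "\<lambda>_. 1"] I12 I1a by simp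
    also have "\<dots> = ennreal (1/a * a)" using a0 by (intro ennreal_mult[symmetric]) auto
    also have "\<dots> = 1" using that by simp
    finally show ?thesis .
  qed
  have Q2tot_0: "(\<integral>\<^sup>+y. Q2 y \<partial>\<rho>) = 0" if "a = 0"
    using Q2int[of "\<lambda>_. 1"] that by simp
  have P1z: "AE x in \<rho>. P1 x = 0" if "a = 0"
    using I1a that by (subst nn_integral_0_iff_AE[symmetric]) auto
  have P2z: "AE x in \<rho>. P2 x = 0" if "a = 0"
    using I1a I12 that by (subst nn_integral_0_iff_AE[symmetric]) auto
  have keyA: "(\<integral>\<^sup>+x. P1 x * h x * (\<integral>\<^sup>+y. Q2 y \<partial>\<rho>) \<partial>\<rho>) = (\<integral>\<^sup>+x. P1 x * h x \<partial>\<rho>)"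
    if [measurable]: "h \<in> borel_measurable borel" for h
  proof (cases "a = 0")
    case True
    have "(\<integral>\<^sup>+x. P1 x * h x \<partial>\<rho>) = 0"
      using P1z[OF True] by (subst nn_integral_0_iff_AE) (auto elim!: eventually_mono)
    then show ?thesis using Q2tot_0[OF True] by simp
  next
    case False
    then show ?thesis using Q2tot_pos a0 by simp
  qed
  have keyB: "(\<integral>\<^sup>+x. P1 x \<partial>\<rho>) * (\<integral>\<^sup>+y. Q2 y * h y \<partial>\<rho>) = (\<integral>\<^sup>+x. P2 x * h x \<partial>\<rho>)"
    if [measurable]: "h \<in> borel_measurable borel" for h
  proof (cases "a = 0")
    case True
    have "(\<integral>\<^sup>+x. P2 x * h x \<partial>\<rho>) = 0"
      using P2z[OF True] by (subst nn_integral_0_iff_AE) (auto elim!: eventually_mono)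
    then show ?thesis using I1a True by simp
  next
    case False
    have "ennreal a * ennreal (1/a) = ennreal (a * (1/a))" using a0 by (intro ennreal_mult[symmetric]) auto
    also have "\<dots> = 1" using False by simp
    finally have "ennreal a * ennreal (1/a) = 1" .
    then show ?thesis unfolding I1a Q2int[OF that] by (simp add: mult.assoc[symmetric])
  qed
  have fstm: "fst \<in> measurable \<omega> borel" unfolding om by (simp add: measurable_cong_sets[OF cpl_sets refl])
  have sndm: "snd \<in> measurable \<omega> borel" unfolding om by (simp add: measurable_cong_sets[OF cpl_sets refl])
  have setsom: "sets \<omega> = sets (borel \<Otimes>\<^sub>M borel)" unfolding om by (rule cpl_sets)
  have spom: "space \<omega> = UNIV" unfolding om by (rule cpl_space)
  show "distr \<omega> borel fst = density \<rho> f1"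
  proof (rule measure_eqI)
    show "sets (distr \<omega> borel fst) = sets (density \<rho> f1)" using S by simp
    fix A assume "A \<in> sets (distr \<omega> borel fst)"
    hence A[measurable]: "A \<in> sets borel" by simp
    have AU: "A \<times> UNIV \<in> sets \<omega>" unfolding setsom by measurable
    have "emeasure (distr \<omega> borel fst) A = emeasure \<omega> (A \<times> UNIV)"
    proof -
      have "fst -` A \<inter> space \<omega> = A \<times> UNIV" using spom by auto
      then show ?thesis using emeasure_distr[OF fstm A] by simp
    qed
    also have "\<dots> = (\<integral>\<^sup>+z. indicator (A \<times> UNIV) z \<partial>\<omega>)" using AU by simp
    also have "\<dots> = (\<integral>\<^sup>+x. M0 x * indicator A x \<partial>\<rho>) + (\<integral>\<^sup>+x. \<integral>\<^sup>+y. P1 x * Q2 y * indicator A x \<partial>\<rho> \<partial>\<rho>)"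
      unfolding om by (subst master[OF P S]) (auto simp: indicator_times)
    also have "(\<integral>\<^sup>+x. \<integral>\<^sup>+y. P1 x * Q2 y * indicator A x \<partial>\<rho> \<partial>\<rho>) = (\<integral>\<^sup>+x. P1 x * indicator A x * (\<integral>\<^sup>+y. Q2 y \<partial>\<rho>) \<partial>\<rho>)"
      by (intro nn_integral_cong) (simp add: nn_integral_cmult[symmetric] mult_ac)
    also have "\<dots> = (\<integral>\<^sup>+x. P1 x * indicator A x \<partial>\<rho>)" by (rule keyA) measurable
    also have "(\<integral>\<^sup>+x. M0 x * indicator A x \<partial>\<rho>) + \<dots> = (\<integral>\<^sup>+x. ennreal (f1 x) * indicator A x \<partial>\<rho>)"
      unfolding e1 by (subst nn_integral_add[symmetric]) (auto simp: distrib_right)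
    also have "\<dots> = emeasure (density \<rho> f1) A" using A S by (simp add: emeasure_density mult.commute)
    finally show "emeasure (distr \<omega> borel fst) A = emeasure (density \<rho> f1) A" .
  qed
  show "distr \<omega> borel snd = density \<rho> f2"
  proof (rule measure_eqI)
    show "sets (distr \<omega> borel snd) = sets (density \<rho> f2)" using S by simp
    fix A assume "A \<in> sets (distr \<omega> borel snd)"
    hence A[measurable]: "A \<in> sets borel" by simp
    have AU: "UNIV \<times> A \<in> sets \<omega>" unfolding setsom by measurable
    have "emeasure (distr \<omega> borel snd) A = emeasure \<omega> (UNIV \<times> A)"
    proof -
      have "snd -` A \<inter> space \<omega> = UNIV \<times> A" using spom by auto
      then show ?thesis using emeasure_distr[OF sndm A] by simp
    qed
    also have "\<dots> = (\<integral>\<^sup>+z. indicator (UNIV \<times> A) z \<partial>\<omega>)" using AU by simp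
    also have "\<dots> = (\<integral>\<^sup>+x. M0 x * indicator A x \<partial>\<rho>) + (\<integral>\<^sup>+x. \<integral>\<^sup>+y. P1 x * (Q2 y * indicator A y) \<partial>\<rho> \<partial>\<rho>)"
      unfolding om by (subst master[OF P S]) (auto simp: indicator_times mult_ac)
    also have "(\<integral>\<^sup>+x. \<integral>\<^sup>+y. P1 x * (Q2 y * indicator A y) \<partial>\<rho> \<partial>\<rho>) = (\<integral>\<^sup>+x. P1 x * (\<integral>\<^sup>+y. Q2 y * indicator A y \<partial>\<rho>) \<partial>\<rho>)"
      by (intro nn_integral_cong) (simp add: nn_integral_cmult[symmetric])
    also have "\<dots> = (\<integral>\<^sup>+x. P1 x \<partial>\<rho>) * (\<integral>\<^sup>+y. Q2 y * indicator A y \<partial>\<rho>)"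
      by (simp add: nn_integral_multc)
    also have "\<dots> = (\<integral>\<^sup>+x. P2 x * indicator A x \<partial>\<rho>)" by (rule keyB) measurable
    also have "(\<integral>\<^sup>+x. M0 x * indicator A x \<partial>\<rho>) + \<dots> = (\<integral>\<^sup>+x. ennreal (f2 x) * indicator A x \<partial>\<rho>)"
      unfolding e2 by (subst nn_integral_add[symmetric]) (auto simp: distrib_right)
    also have "\<dots> = emeasure (density \<rho> f2) A" using A S by (simp add: emeasure_density mult.commute)
    finally show "emeasure (distr \<omega> borel snd) A = emeasure (density \<rho> f2) A" .
  qed
  show "(\<integral>\<^sup>+z. ennreal (c (fst z) (snd z)) \<partial>\<omega>) \<le> ennreal K * (\<integral>\<^sup>+x. ennreal (g x * \<bar>f1 x - f2 x\<bar>) \<partial>\<rho>)"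
    if cm: "case_prod c \<in> borel_measurable (borel \<Otimes>\<^sub>M borel)" and c0: "\<And>x. c x x = 0" and K: "0 \<le> K"
      and gm[measurable]: "g \<in> borel_measurable borel" and g0: "\<And>x. 0 \<le> g x" and cp: "\<And>x y. 0 \<le> c x y"
      and cle: "\<And>x y. c x y \<le> K * (g x + g y)" for c g K
  proof -
    have hm[measurable]: "(\<lambda>z. ennreal (c (fst z) (snd z))) \<in> borel_measurable (borel \<Otimes>\<^sub>M borel)"
      using cm by (simp add: split_beta')
    have "(\<integral>\<^sup>+z. ennreal (c (fst z) (snd z)) \<partial>\<omega>) = (\<integral>\<^sup>+x. M0 x * ennreal (c x x) \<partial>\<rho>) + (\<integral>\<^sup>+x. \<integral>\<^sup>+y. P1 x * Q2 y * ennreal (c x y) \<partial>\<rho> \<partial>\<rho>)"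
      unfolding om by (subst master[OF P S]) auto
    also have "(\<integral>\<^sup>+x. M0 x * ennreal (c x x) \<partial>\<rho>) = 0" using c0 by simp
    also have "(\<integral>\<^sup>+x. \<integral>\<^sup>+y. P1 x * Q2 y * ennreal (c x y) \<partial>\<rho> \<partial>\<rho>) \<le>
        (\<integral>\<^sup>+x. \<integral>\<^sup>+y. ennreal K * (P1 x * ennreal (g x) * Q2 y) + ennreal K * (P1 x * (Q2 y * ennreal (g y))) \<partial>\<rho> \<partial>\<rho>)"
    proof (intro nn_integral_mono)
      fix x y
      have "ennreal (c x y) \<le> ennreal K * (ennreal (g x) + ennreal (g y))"
        using cle[of x y] K g0[of x] g0[of y] by (simp add: ennreal_mult[symmetric] ennreal_plus[symmetric] ennreal_leI del: ennreal_plus ennreal_mult')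
      then have "P1 x * Q2 y * ennreal (c x y) \<le> P1 x * Q2 y * (ennreal K * (ennreal (g x) + ennreal (g y)))"
        by (intro mult_left_mono) auto
      also have "\<dots> = ennreal K * (P1 x * ennreal (g x) * Q2 y) + ennreal K * (P1 x * (Q2 y * ennreal (g y)))"
        by (simp add: algebra_simps)
      finally show "P1 x * Q2 y * ennreal (c x y) \<le> ennreal K * (P1 x * ennreal (g x) * Q2 y) + ennreal K * (P1 x * (Q2 y * ennreal (g y)))" .
    qed
    also have "\<dots> = ennreal K * ((\<integral>\<^sup>+x. P1 x * ennreal (g x) * (\<integral>\<^sup>+y. Q2 y \<partial>\<rho>) \<partial>\<rho>) + (\<integral>\<^sup>+x. P1 x \<partial>\<rho>) * (\<integral>\<^sup>+y. Q2 y * ennreal (g y) \<partial>\<rho>))"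
      by (simp add: nn_integral_add nn_integral_cmult nn_integral_multc distrib_left)
    also have "\<dots> = ennreal K * ((\<integral>\<^sup>+x. P1 x * ennreal (g x) \<partial>\<rho>) + (\<integral>\<^sup>+x. P2 x * ennreal (g x) \<partial>\<rho>))"
      using keyA[of "\<lambda>x. ennreal (g x)"] keyB[of "\<lambda>x. ennreal (g x)"] by simp
    also have "(\<integral>\<^sup>+x. P1 x * ennreal (g x) \<partial>\<rho>) + (\<integral>\<^sup>+x. P2 x * ennreal (g x) \<partial>\<rho>) = (\<integral>\<^sup>+x. ennreal (g x * \<bar>f1 x - f2 x\<bar>) \<partial>\<rho>)"
    proof (subst nn_integral_add[symmetric])
      show "(\<integral>\<^sup>+x. P1 x * ennreal (g x) + P2 x * ennreal (g x) \<partial>\<rho>) = (\<integral>\<^sup>+x. ennreal (g x * \<bar>f1 x - f2 x\<bar>) \<partial>\<rho>)"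
      proof (intro nn_integral_cong)
        fix x
        have "\<bar>f1 x - f2 x\<bar> = max 0 (f1 x - f2 x) + max 0 (f2 x - f1 x)" by (simp add: max_def abs_if)
        then have "ennreal (g x * \<bar>f1 x - f2 x\<bar>) = ennreal (max 0 (f1 x - f2 x) * g x + max 0 (f2 x - f1 x) * g x)"
          by (simp add: algebra_simps)
        also have "\<dots> = ennreal (max 0 (f1 x - f2 x) * g x) + ennreal (max 0 (f2 x - f1 x) * g x)"
          using g0[of x] by (intro ennreal_plus) auto
        also have "ennreal (max 0 (f1 x - f2 x) * g x) = P1 x * ennreal (g x)"
          unfolding P1_def using g0[of x] by (intro ennreal_mult) auto
        also have "ennreal (max 0 (f2 x - f1 x) * g x) = P2 x * ennreal (g x)"
          unfolding P2_def using g0[of x] by (intro ennreal_mult) auto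
        finally show "P1 x * ennreal (g x) + P2 x * ennreal (g x) = ennreal (g x * \<bar>f1 x - f2 x\<bar>)" by simp
      qed
    qed auto
    finally show ?thesis by simp
  qed
qed


lemma log_e: "log (exp 1) x = ln x" by (simp add: log_def)

lemma kl_part:
  fixes \<rho> \<nu> :: "'a measure"
  assumes Pr: "prob_space \<rho>" and Pn: "prob_space \<nu>" and S: "sets \<nu> = sets \<rho>"
    and ac1: "absolutely_continuous \<rho> \<nu>" and ac2: "absolutely_continuous \<nu> \<rho>"
    and I1: "integrable \<nu> (entropy_density (exp 1) \<rho> \<nu>)"
    and I2: "integrable \<rho> (entropy_density (exp 1) \<nu> \<rho>)"
  shows "\<exists>f. f \<in> borel_measurable \<rho> \<and> (\<forall>x. 0 \<le> f x) \<and> \<nu> = density \<rho> f \<and> (AE x in \<rho>. 0 < f x) \<and>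
     (\<integral>\<^sup>+x. ennreal ((f x - 1) * ln (f x)) \<partial>\<rho>) = ennreal (KL_divergence (exp 1) \<rho> \<nu> + KL_divergence (exp 1) \<nu> \<rho>) \<and>
     0 \<le> KL_divergence (exp 1) \<rho> \<nu> + KL_divergence (exp 1) \<nu> \<rho>"
proof -
  interpret rho: prob_space \<rho> by fact
  interpret nu: prob_space \<nu> by fact
  define f where "f = (\<lambda>x. enn2real (RN_deriv \<rho> \<nu> x))"
  have fm[measurable]: "f \<in> borel_measurable \<rho>" unfolding f_def by measurable
  have f0: "\<forall>x. 0 \<le> f x" unfolding f_def by simp
  have fin: "AE x in \<rho>. RN_deriv \<rho> \<nu> x \<noteq> \<infinity>"
    by (rule rho.RN_deriv_finite[OF nu.sigma_finite_measure_axioms ac1 S])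
  have nud: "\<nu> = density \<rho> f"
  proof -
    have "density \<rho> f = density \<rho> (RN_deriv \<rho> \<nu>)"
      using fin unfolding f_def by (intro density_cong) (auto elim!: eventually_mono simp: ennreal_enn2real_if)
    also have "\<dots> = \<nu>" by (rule rho.density_RN_deriv[OF ac1 S])
    finally show ?thesis by simp
  qed
  have fpos: "AE x in \<rho>. 0 < f x"
  proof -
    have Z[measurable]: "{x \<in> space \<rho>. f x = 0} \<in> sets \<rho>" by measurable
    have "emeasure \<nu> {x \<in> space \<rho>. f x = 0} = (\<integral>\<^sup>+x. ennreal (f x) * indicator {x \<in> space \<rho>. f x = 0} x \<partial>\<rho>)"
      unfolding nud by (simp add: emeasure_density)
    also have "\<dots> = 0" by (intro nn_integral_zero') (auto simp: indicator_def)
    finally have "{x \<in> space \<rho>. f x = 0} \<in> null_sets \<nu>" using Z S by (simp add: null_sets_def)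
    hence "{x \<in> space \<rho>. f x = 0} \<in> null_sets \<rho>" using ac2 unfolding absolutely_continuous_def by auto
    hence "AE x in \<rho>. f x \<noteq> 0" using AE_space by (auto dest!: AE_not_in elim!: eventually_rev_mp)
    then show ?thesis using f0 by (auto elim!: eventually_mono simp: less_le)
  qed
  have KL1: "KL_divergence (exp 1) \<rho> \<nu> = (\<integral>x. f x * ln (f x) \<partial>\<rho>)"
    unfolding nud using f0 by (subst rho.KL_density) (auto simp: log_e)
  have KL2: "KL_divergence (exp 1) \<nu> \<rho> = (\<integral>x. ln (1 / f x) \<partial>\<rho>)"
  proof -
    have "KL_divergence (exp 1) (density \<rho> f) (density \<rho> (\<lambda>x. ennreal 1)) = (\<integral>x. 1 * log (exp 1) (1 / f x) \<partial>\<rho>)"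
      using f0 fpos by (intro rho.KL_density_density) (auto elim!: eventually_mono)
    then show ?thesis unfolding nud[symmetric] by (simp add: log_e density_1)
  qed
  have int1: "integrable \<rho> (\<lambda>x. f x * ln (f x))"
  proof -
    have "integrable (density \<rho> f) (entropy_density (exp 1) \<rho> \<nu>)" using I1 nud by simp
    hence "integrable \<rho> (\<lambda>x. f x *\<^sub>R entropy_density (exp 1) \<rho> \<nu> x)"
      using f0 by (subst integrable_density[symmetric]) auto
    then show ?thesis by (simp add: entropy_density_def f_def log_e)
  qed
  have int2: "integrable \<rho> (\<lambda>x. ln (1 / f x))"
  proof -
    have rd: "\<rho> = density \<nu> (\<lambda>x. 1 / f x)"
    proof -
      have "density \<nu> (\<lambda>x. 1 / f x) = density (density \<rho> f) (\<lambda>x. 1 / f x)" using nud by simp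
      also have "\<dots> = density \<rho> (\<lambda>x. ennreal 1)"
      proof -
        have "AE x in \<rho>. f x \<noteq> 0" using fpos by (auto elim!: eventually_mono)
        then show ?thesis using f0 density_density_divide[of f \<rho> "\<lambda>_. 1"] by auto
      qed
      finally show ?thesis by (simp add: density_1)
    qed
    have gm[measurable]: "(\<lambda>x. 1 / f x) \<in> borel_measurable \<nu>"
      by (subst measurable_cong_sets[OF S refl]) measurable
    have "density \<nu> (RN_deriv \<nu> (density \<nu> (\<lambda>x. 1 / f x))) = density \<nu> (\<lambda>x. 1 / f x)"
      by (rule density_RN_deriv_density) measurable
    then have "AE x in \<nu>. RN_deriv \<nu> (density \<nu> (\<lambda>x. 1 / f x)) x = ennreal (1 / f x)"
      by (intro nu.density_unique) auto
    then have "AE x in \<nu>. RN_deriv \<nu> \<rho> x = ennreal (1 / f x)" using rd by simp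
    then have "AE x in \<rho>. RN_deriv \<nu> \<rho> x = ennreal (1 / f x)"
      using absolutely_continuous_AE[OF S[symmetric] ac2] by blast
    then have "AE x in \<rho>. entropy_density (exp 1) \<nu> \<rho> x = ln (1 / f x)"
      using f0 by (auto elim!: eventually_mono simp: entropy_density_def log_e)
    then show ?thesis by (intro integrable_cong_AE_imp[OF I2]) auto
  qed
  have AEnn: "AE x in \<rho>. 0 \<le> f x * ln (f x) + ln (1 / f x)"
      using fpos
    proof (rule eventually_mono)
      fix x assume x: "0 < f x"
      have "f x * ln (f x) + ln (1 / f x) = (f x - 1) * ln (f x)" using x by (simp add: ln_div algebra_simps)
      also have "0 \<le> \<dots>"
      proof (cases "f x \<le> 1")
        case True then show ?thesis using x by (intro mult_nonpos_nonpos) auto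
      next
        case False then show ?thesis by (intro mult_nonneg_nonneg) auto
      qed
      finally show "0 \<le> f x * ln (f x) + ln (1 / f x)" .
    qed
  have Snn: "0 \<le> KL_divergence (exp 1) \<rho> \<nu> + KL_divergence (exp 1) \<nu> \<rho>"
    unfolding KL1 KL2 using int1 int2 AEnn by (simp add: integral_nonneg_AE flip: Bochner_Integration.integral_add)
  have "(\<integral>\<^sup>+x. ennreal ((f x - 1) * ln (f x)) \<partial>\<rho>) = (\<integral>\<^sup>+x. ennreal (f x * ln (f x) + ln (1 / f x)) \<partial>\<rho>)"
    using fpos by (intro nn_integral_cong_AE) (auto elim!: eventually_mono simp: ln_div algebra_simps)
  also have "\<dots> = ennreal (\<integral>x. f x * ln (f x) + ln (1 / f x) \<partial>\<rho>)"
  proof (rule nn_integral_eq_integral)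
    show "integrable \<rho> (\<lambda>x. f x * ln (f x) + ln (1 / f x))" using int1 int2 by simp
    show "AE x in \<rho>. 0 \<le> f x * ln (f x) + ln (1 / f x)" by (rule AEnn)
  qed
  also have "\<dots> = ennreal (KL_divergence (exp 1) \<rho> \<nu> + KL_divergence (exp 1) \<nu> \<rho>)"
    unfolding KL1 KL2 using int1 int2 by simp
  finally show ?thesis using fm f0 nud fpos Snn by blast
qed


lemma J_bound:
  fixes \<rho> :: "'a measure" and f g :: "'a \<Rightarrow> real" and d :: nat and S :: real
  assumes P: "prob_space \<rho>" and fm[measurable]: "f \<in> borel_measurable \<rho>" and fpos: "AE x in \<rho>. 0 < f x"
    and gm[measurable]: "g \<in> borel_measurable \<rho>" and g0: "\<And>x. 0 \<le> g x" and d1: "1 \<le> d"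
    and SS: "(\<integral>\<^sup>+x. ennreal ((f x - 1) * ln (f x)) \<partial>\<rho>) = ennreal S" and S0: "0 \<le> S"
    and Z: "(\<integral>\<^sup>+x. ennreal (exp (g x)) \<partial>\<rho>) \<le> ennreal (11/10 * exp (real d/2))"
  shows "(\<integral>\<^sup>+x. ennreal (g x * \<bar>f x - 1\<bar>) \<partial>\<rho>) \<le> ennreal ((3 + real d) * (S + sqrt (S/2)))"
proof -
  define a where "a = 3 + real d"
  have a4: "4 \<le> a" using d1 unfolding a_def by simp
  have M0: "(\<integral>\<^sup>+x. ennreal ((g x)^2 * exp (g x / a)) \<partial>\<rho>) \<le> ennreal (a^2/2)"
    unfolding a_def by (rule mom_bound[OF P gm g0 d1 Z])
  define Jn where "Jn = (\<integral>\<^sup>+x. ennreal (g x * \<bar>f x - 1\<bar>) \<partial>\<rho>)"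
  have step: "ennreal l * Jn \<le> ennreal (S + l^2 * (a^2/8))" if l: "0 < l" "l \<le> 1/a" for l
  proof -
    have "ennreal l * Jn = (\<integral>\<^sup>+x. ennreal (l * (g x * \<bar>f x - 1\<bar>)) \<partial>\<rho>)"
      unfolding Jn_def using l g0 by (subst nn_integral_cmult[symmetric]) (auto simp: ennreal_mult)
    also have "\<dots> \<le> (\<integral>\<^sup>+x. ennreal ((f x - 1) * ln (f x)) + ennreal (l^2/4) * ennreal ((g x)^2 * exp (g x / a)) \<partial>\<rho>)"
    proof (rule nn_integral_mono_AE)
      show "AE x in \<rho>. ennreal (l * (g x * \<bar>f x - 1\<bar>)) \<le> ennreal ((f x - 1) * ln (f x)) + ennreal (l^2/4) * ennreal ((g x)^2 * exp (g x / a))"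
        using fpos
      proof (rule eventually_mono)
        fix x assume fx: "0 < f x"
        have y: "(l * g x) * \<bar>f x - 1\<bar> \<le> (f x - 1) * ln (f x) + (l * g x)^2/4 * exp (l * g x)"
          using young_pt[of "l * g x" "f x"] l g0[of x] fx by simp
        have "exp (l * g x) \<le> exp (g x / a)"
        proof -
          have "l * g x \<le> (1/a) * g x" using l g0[of x] by (intro mult_right_mono) auto
          then show ?thesis by simp
        qed
        hence "(l * g x)^2/4 * exp (l * g x) \<le> (l * g x)^2/4 * exp (g x / a)"
          by (intro mult_left_mono) auto
        also have "\<dots> = (l^2/4) * ((g x)^2 * exp (g x / a))" by (simp add: power_mult_distrib)
        finally have "(l * g x)^2/4 * exp (l * g x) \<le> (l^2/4) * ((g x)^2 * exp (g x / a))" .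
        with y have r: "l * (g x * \<bar>f x - 1\<bar>) \<le> (f x - 1) * ln (f x) + (l^2/4) * ((g x)^2 * exp (g x / a))"
          by (simp add: mult.assoc)
        have nn: "0 \<le> (f x - 1) * ln (f x)"
        proof (cases "f x \<le> 1")
          case True then show ?thesis using fx by (intro mult_nonpos_nonpos) auto
        next
          case False then show ?thesis by (intro mult_nonneg_nonneg) auto
        qed
        have "ennreal (l * (g x * \<bar>f x - 1\<bar>)) \<le> ennreal ((f x - 1) * ln (f x) + (l^2/4) * ((g x)^2 * exp (g x / a)))"
          using r by (rule ennreal_leI)
        also have "\<dots> = ennreal ((f x - 1) * ln (f x)) + ennreal (l^2/4) * ennreal ((g x)^2 * exp (g x / a))"
        proof -
          have "ennreal ((f x - 1) * ln (f x) + (l^2/4) * ((g x)^2 * exp (g x / a))) = ennreal ((f x - 1) * ln (f x)) + ennreal ((l^2/4) * ((g x)^2 * exp (g x / a)))"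
            using nn by (intro ennreal_plus) auto
          also have "ennreal ((l^2/4) * ((g x)^2 * exp (g x / a))) = ennreal (l^2/4) * ennreal ((g x)^2 * exp (g x / a))"
            by (intro ennreal_mult) auto
          finally show ?thesis .
        qed
        finally show "ennreal (l * (g x * \<bar>f x - 1\<bar>)) \<le> ennreal ((f x - 1) * ln (f x)) + ennreal (l^2/4) * ennreal ((g x)^2 * exp (g x / a))" .
      qed
    qed
    also have "\<dots> = ennreal S + ennreal (l^2/4) * (\<integral>\<^sup>+x. ennreal ((g x)^2 * exp (g x / a)) \<partial>\<rho>)"
      by (subst nn_integral_add) (auto simp: SS nn_integral_cmult)
    also have "\<dots> \<le> ennreal S + ennreal (l^2/4) * ennreal (a^2/2)"
      by (intro add_mono mult_left_mono M0) auto
    also have "\<dots> = ennreal (S + l^2 * (a^2/8))"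
      using S0 by (simp add: ennreal_plus[symmetric] ennreal_mult[symmetric] del: ennreal_plus)
    finally show ?thesis .
  qed
  have a0: "0 < a" using a4 by simp
  have Jfin: "Jn \<noteq> \<infinity>"
  proof
    assume "Jn = \<infinity>"
    then have "ennreal (1/a) * Jn = \<infinity>" using a0 by (simp add: ennreal_mult_top)
    moreover have "ennreal (1/a) * Jn \<le> ennreal (S + (1/a)^2 * (a^2/8))" using a0 by (intro step) auto
    ultimately have "\<infinity> \<le> ennreal (S + (1/a)^2 * (a^2/8))" by simp
    then show False by (simp add: top_unique)
  qed
  define J where "J = enn2real Jn"
  have JJ: "Jn = ennreal J" unfolding J_def using Jfin by (simp add: ennreal_enn2real_if)
  have J0: "0 \<le> J" unfolding J_def by simp
  have "J \<le> a * (S + sqrt (S/2))"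
  proof (rule regimes[OF S0 _ _ a0])
    show "0 \<le> a^2/8" "a^2/8 \<le> a^2/8" by auto
    fix l :: real assume l: "0 < l" "l \<le> 1/a"
    have "ennreal (l * J) = ennreal l * Jn" unfolding JJ using l J0 by (intro ennreal_mult) auto
    hence "ennreal (l * J) \<le> ennreal (S + l^2 * (a^2/8))" using step[OF l] by simp
    hence lJ: "l * J \<le> S + l^2 * (a^2/8)" using S0 by (subst (asm) ennreal_le_iff) auto
    have "J \<le> (S + l^2 * (a^2/8)) / l" using l lJ by (subst pos_le_divide_eq) (auto simp: mult.commute)
    also have "(S + l^2 * (a^2/8)) / l = S/l + l * (a^2/8)" using l by (simp add: field_simps power2_eq_square)
    finally show "J \<le> S/l + l * (a^2/8)" .
  qed
  then have "Jn \<le> ennreal (a * (S + sqrt (S/2)))" unfolding JJ by (rule ennreal_leI)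
  then show ?thesis unfolding Jn_def a_def .
qed


lemma powr_sum_le:
  fixes s t p :: real assumes s: "0 \<le> s" and t: "0 \<le> t" and p: "1 \<le> p"
  shows "(s + t) powr p \<le> 2 powr (p - 1) * (s powr p + t powr p)"
proof -
  have K1: "1 \<le> 2 powr (p - 1)" using p by (intro ge_one_powr_ge_zero) auto
  show ?thesis
  proof (cases "s = 0 \<or> t = 0")
    case True
    then show ?thesis
    proof
      assume "s = 0"
      then show ?thesis using K1 t by (simp add: mult_le_cancel_right1 powr_nonneg_iff)
    next
      assume "t = 0"
      then show ?thesis using K1 s by (simp add: mult_le_cancel_right1 powr_nonneg_iff)
    qed
  next
    case False
    hence s0: "0 < s" and t0: "0 < t" using s t by auto
    have "((1 - 1/2) *\<^sub>R s + (1/2) *\<^sub>R t) powr p \<le> (1 - 1/2) * s powr p + (1/2) * t powr p"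
      using convex_onD[OF powr_convex[OF p], of "1/2" s t] s0 t0 by simp
    hence c: "((s + t)/2) powr p \<le> (s powr p + t powr p)/2" by (simp add: field_simps)
    have "s + t = 2 * ((s + t)/2)" by simp
    hence "(s + t) powr p = (2 * ((s + t)/2)) powr p" by metis
    also have "\<dots> = 2 powr p * ((s + t)/2) powr p" using s t by (subst powr_mult) auto
    also have "\<dots> \<le> 2 powr p * ((s powr p + t powr p)/2)" using c by (intro mult_left_mono) auto
    also have "\<dots> = 2 powr (p - 1) * (s powr p + t powr p)" by (simp add: powr_diff)
    finally show ?thesis .
  qed
qed

lemma powr_subadd:
  fixes x y q :: real assumes x: "0 \<le> x" and y: "0 \<le> y" and q: "0 < q" "q \<le> 1"
  shows "(x + y) powr q \<le> x powr q + y powr q"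
proof (cases "x + y = 0")
  case True then show ?thesis using x y by simp
next
  case False
  hence xy: "0 < x + y" using x y by simp
  define t where "t = x / (x + y)"
  have t: "0 \<le> t" "t \<le> 1" using x y xy unfolding t_def by auto
  have xt: "x = (x + y) * t" and yt: "y = (x + y) * (1 - t)" using xy unfolding t_def by (auto simp: field_simps)
  have "t \<le> t powr q"
  proof (cases "t = 0")
    case True then show ?thesis by simp
  next
    case False
    then have "t powr 1 \<le> t powr q" using t q by (intro powr_mono') auto
    then show ?thesis using t False by simp
  qed
  moreover have "1 - t \<le> (1 - t) powr q"
  proof (cases "1 - t = 0")
    case True then show ?thesis by simp
  next
    case False
    then have "(1 - t) powr 1 \<le> (1 - t) powr q" using t q by (intro powr_mono') auto
    then show ?thesis using t False by simp
  qed
  ultimately have "(x + y) powr q * 1 \<le> (x + y) powr q * (t powr q + (1 - t) powr q)"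
    by (intro mult_left_mono) auto
  also have "\<dots> = ((x + y) * t) powr q + ((x + y) * (1 - t)) powr q"
    using xy t by (simp add: powr_mult distrib_left)
  also have "\<dots> = x powr q + y powr q" using xt yt by simp
  finally show ?thesis by simp
qed

lemma final_real:
  fixes p a S B :: real assumes p: "1 \<le> p" and a: "2 \<le> a" and S: "0 \<le> S"
    and B: "0 \<le> B" "B \<le> 2 powr (p - 1) * (a * (S + sqrt (S/2)))"
  shows "B powr (1/p) \<le> a * (S powr (1/p) + (S/2) powr (1/(2*p)))"
proof -
  have p0: "0 < p" using p by simp
  have q: "0 < 1/p" "1/p \<le> 1" using p by auto
  have "B powr (1/p) \<le> (2 powr (p - 1) * a * (S + sqrt (S/2))) powr (1/p)"
    using B S p0 by (intro powr_mono2) (auto simp: mult.assoc)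
  also have "\<dots> = (2 powr (p - 1) * a) powr (1/p) * (S + sqrt (S/2)) powr (1/p)"
    using a S by (subst powr_mult) auto
  also have "(2 powr (p - 1) * a) powr (1/p) \<le> a"
  proof -
    have "2 powr (p - 1) \<le> a powr (p - 1)" using a p by (intro powr_mono2) auto
    hence "2 powr (p - 1) * a \<le> a powr (p - 1) * a" using a by (intro mult_right_mono) auto
    also have "\<dots> = a powr p" using a by (simp add: powr_diff)
    finally have "(2 powr (p - 1) * a) powr (1/p) \<le> (a powr p) powr (1/p)"
      using a p0 by (intro powr_mono2) auto
    also have "\<dots> = a" using a p0 by (simp add: powr_powr)
    finally show ?thesis .
  qed
  hence "(2 powr (p - 1) * a) powr (1/p) * (S + sqrt (S/2)) powr (1/p) \<le> a * (S + sqrt (S/2)) powr (1/p)"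
    by (intro mult_right_mono) auto
  also have "(S + sqrt (S/2)) powr (1/p) \<le> S powr (1/p) + sqrt (S/2) powr (1/p)"
    using S q by (intro powr_subadd) auto
  also have "sqrt (S/2) powr (1/p) = (S/2) powr (1/(2*p))"
    using S by (simp add: powr_half_sqrt[symmetric] powr_powr)
  finally show ?thesis using a by (simp add: mult_left_mono)
qed


lemma mv_meas[measurable]:
  fixes A :: "real^'n^'m"
  assumes [measurable]: "h \<in> borel_measurable M"
  shows "(\<lambda>x. A *v h x) \<in> borel_measurable M"
proof -
  have "(\<lambda>x. A *v x) \<in> borel_measurable borel"
    by (intro borel_measurable_continuous_onI linear_continuous_on) auto
  then show ?thesis using assms by (rule measurable_compose[rotated])
qed

lemma wp_bound:
  fixes \<rho> :: "(real^'n) measure" and f :: "real^'n \<Rightarrow> real" and p S :: real and \<Sigma> :: "real^'n^'n" and x0 :: "real^'n"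
  assumes P: "prob_space \<rho>" and Sr: "sets \<rho> = sets borel"
    and fm[measurable]: "f \<in> borel_measurable borel" and f0: "\<And>x. 0 \<le> f x" and fpos: "AE x in \<rho>. 0 < f x"
    and Pf: "prob_space (density \<rho> f)"
    and SS: "(\<integral>\<^sup>+x. ennreal ((f x - 1) * ln (f x)) \<partial>\<rho>) = ennreal S" and S0: "0 \<le> S" and p: "1 \<le> p"
    and Z: "(\<integral>\<^sup>+\<theta>. ennreal (exp (norm (inv_sqrt_mat \<Sigma> *v (\<theta> - x0)) powr p)) \<partial>\<rho>) \<le> ennreal (11/10 * exp (real CARD('n)/2))"
  shows "wasserstein_pow p \<Sigma> (density \<rho> (\<lambda>_. 1)) (density \<rho> f) \<le> ennreal (2 powr (p - 1) * ((3 + real CARD('n)) * (S + sqrt (S/2))))"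
    and "wasserstein_pow p \<Sigma> (density \<rho> f) (density \<rho> (\<lambda>_. 1)) \<le> ennreal (2 powr (p - 1) * ((3 + real CARD('n)) * (S + sqrt (S/2))))"
proof -
  note Sr[measurable_cong]
  interpret rho: prob_space \<rho> by fact
  define A where "A = inv_sqrt_mat \<Sigma>"
  define g where "g = (\<lambda>x. norm (A *v (x - x0)) powr p)"
  define c where "c = (\<lambda>x y. norm (A *v (x - y)) powr p)"
  define K where "K = (2::real) powr (p - 1)"
  have K0: "0 \<le> K" unfolding K_def by simp
  have gm[measurable]: "g \<in> borel_measurable borel" unfolding g_def by measurable
  have g0: "\<And>x. 0 \<le> g x" unfolding g_def by simp
  have cm: "case_prod c \<in> borel_measurable (borel \<Otimes>\<^sub>M borel)" unfolding c_def by measurable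
  have c0: "\<And>x. c x x = 0" unfolding c_def using p by simp
  have cp: "\<And>x y. 0 \<le> c x y" unfolding c_def by simp
  have cle: "c x y \<le> K * (g x + g y)" for x y
  proof -
    have "A *v (x - y) = A *v (x - x0) - A *v (y - x0)" by (simp add: matrix_vector_mult_diff_distrib[symmetric])
    hence "norm (A *v (x - y)) \<le> norm (A *v (x - x0)) + norm (A *v (y - x0))" by (simp add: norm_triangle_ineq4)
    hence "c x y \<le> (norm (A *v (x - x0)) + norm (A *v (y - x0))) powr p" unfolding c_def using p by (intro powr_mono2) auto
    also have "\<dots> \<le> K * (g x + g y)" unfolding K_def g_def using p by (intro powr_sum_le) auto
    finally show ?thesis .
  qed
  have fmr[measurable]: "f \<in> borel_measurable \<rho>" by measurable
  have gmr[measurable]: "g \<in> borel_measurable \<rho>" by measurable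
  have d1: "1 \<le> CARD('n)" by (simp add: Suc_le_eq)
  have J: "(\<integral>\<^sup>+x. ennreal (g x * \<bar>f x - 1\<bar>) \<partial>\<rho>) \<le> ennreal ((3 + real CARD('n)) * (S + sqrt (S/2)))"
    by (rule J_bound[OF P fmr fpos gmr g0 d1 SS S0]) (use Z in \<open>simp add: g_def A_def\<close>)
  have P1: "prob_space (density \<rho> (\<lambda>_. 1))" using P by (simp add: density_1)
  have mainc: "\<exists>\<omega> \<in> couplings (density \<rho> f1) (density \<rho> f2). (\<integral>\<^sup>+z. ennreal (c (fst z) (snd z)) \<partial>\<omega>) \<le> ennreal K * (\<integral>\<^sup>+x. ennreal (g x * \<bar>f1 x - f2 x\<bar>) \<partial>\<rho>)"
    if [measurable]: "f1 \<in> borel_measurable borel" "f2 \<in> borel_measurable borel" and "\<And>x. 0 \<le> f1 x" "\<And>x. 0 \<le> f2 x"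
      and "prob_space (density \<rho> f1)" "prob_space (density \<rho> f2)" for f1 f2
  proof -
    note cc = coupling_main[OF P Sr that]
    define \<omega> where "\<omega> = cpl \<rho> (\<lambda>x. ennreal (min (f1 x) (f2 x))) (\<lambda>x. ennreal (max 0 (f1 x - f2 x)))
      (\<lambda>y. ennreal (max 0 (f2 y - f1 y) / enn2real (\<integral>\<^sup>+x. ennreal (max 0 (f1 x - f2 x)) \<partial>\<rho>)))"
    have m1: "distr \<omega> borel fst = density \<rho> f1" unfolding \<omega>_def by (rule cc(1))
    have m2: "distr \<omega> borel snd = density \<rho> f2" unfolding \<omega>_def by (rule cc(2))
    have so: "sets \<omega> = sets (borel \<Otimes>\<^sub>M borel)" unfolding \<omega>_def by (rule cpl_sets)
    have spo: "space \<omega> = UNIV" unfolding \<omega>_def by (rule cpl_space)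
    have fstm: "fst \<in> measurable \<omega> borel" by (simp add: measurable_cong_sets[OF so refl])
    have "emeasure \<omega> (space \<omega>) = emeasure (distr \<omega> borel fst) UNIV"
      using fstm spo by (subst emeasure_distr) auto
    also have "\<dots> = 1" unfolding m1 using prob_space.emeasure_space_1[OF that(5)]
      by (simp add: sets_eq_imp_space_eq[OF Sr])
    finally have "prob_space \<omega>" by (rule prob_spaceI)
    hence "\<omega> \<in> couplings (density \<rho> f1) (density \<rho> f2)" unfolding couplings_def using m1 m2 so by simp
    moreover have "(\<integral>\<^sup>+z. ennreal (c (fst z) (snd z)) \<partial>\<omega>) \<le> ennreal K * (\<integral>\<^sup>+x. ennreal (g x * \<bar>f1 x - f2 x\<bar>) \<partial>\<rho>)"
      unfolding \<omega>_def by (rule cc(3)[OF cm c0 K0 gm g0 cp cle])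
    ultimately show ?thesis by blast
  qed
  have wp: "wasserstein_pow p \<Sigma> (density \<rho> f1) (density \<rho> f2) \<le> ennreal K * (\<integral>\<^sup>+x. ennreal (g x * \<bar>f1 x - f2 x\<bar>) \<partial>\<rho>)"
    if AA: "f1 \<in> borel_measurable borel" "f2 \<in> borel_measurable borel" "\<And>x. 0 \<le> f1 x" "\<And>x. 0 \<le> f2 x"
      "prob_space (density \<rho> f1)" "prob_space (density \<rho> f2)" for f1 f2
  proof -
    obtain \<omega> where om: "\<omega> \<in> couplings (density \<rho> f1) (density \<rho> f2)"
      and le: "(\<integral>\<^sup>+z. ennreal (c (fst z) (snd z)) \<partial>\<omega>) \<le> ennreal K * (\<integral>\<^sup>+x. ennreal (g x * \<bar>f1 x - f2 x\<bar>) \<partial>\<rho>)"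
      using mainc[OF AA] by blast
    have "wasserstein_pow p \<Sigma> (density \<rho> f1) (density \<rho> f2) \<le> (\<integral>\<^sup>+z. ennreal (c (fst z) (snd z)) \<partial>\<omega>)"
      unfolding wasserstein_pow_def c_def A_def by (rule INF_lower[OF om])
    then show ?thesis using le by (rule order_trans)
  qed
  have fin: "ennreal K * (\<integral>\<^sup>+x. ennreal (g x * \<bar>f x - 1\<bar>) \<partial>\<rho>) \<le> ennreal (K * ((3 + real CARD('n)) * (S + sqrt (S/2))))"
  proof -
    have "ennreal K * (\<integral>\<^sup>+x. ennreal (g x * \<bar>f x - 1\<bar>) \<partial>\<rho>) \<le> ennreal K * ennreal ((3 + real CARD('n)) * (S + sqrt (S/2)))"
      using J by (rule mult_left_mono) simp
    also have "\<dots> = ennreal (K * ((3 + real CARD('n)) * (S + sqrt (S/2))))" using K0 S0 by (intro ennreal_mult[symmetric]) auto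
    finally show ?thesis .
  qed
  show "wasserstein_pow p \<Sigma> (density \<rho> (\<lambda>_. 1)) (density \<rho> f) \<le> ennreal (2 powr (p - 1) * ((3 + real CARD('n)) * (S + sqrt (S/2))))"
  proof -
    have "wasserstein_pow p \<Sigma> (density \<rho> (\<lambda>_. 1)) (density \<rho> f) \<le> ennreal K * (\<integral>\<^sup>+x. ennreal (g x * \<bar>1 - f x\<bar>) \<partial>\<rho>)"
      using wp[of "\<lambda>_. 1" f] P1 Pf f0 by simp
    also have "(\<lambda>x. ennreal (g x * \<bar>1 - f x\<bar>)) = (\<lambda>x. ennreal (g x * \<bar>f x - 1\<bar>))" by (simp add: abs_minus_commute)
    finally show ?thesis using fin unfolding K_def by simp
  qed
  show "wasserstein_pow p \<Sigma> (density \<rho> f) (density \<rho> (\<lambda>_. 1)) \<le> ennreal (2 powr (p - 1) * ((3 + real CARD('n)) * (S + sqrt (S/2))))"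
  proof -
    have "wasserstein_pow p \<Sigma> (density \<rho> f) (density \<rho> (\<lambda>_. 1)) \<le> ennreal K * (\<integral>\<^sup>+x. ennreal (g x * \<bar>f x - 1\<bar>) \<partial>\<rho>)"
      using wp[of f "\<lambda>_. 1"] P1 Pf f0 by simp
    then show ?thesis using fin unfolding K_def by simp
  qed
qed


lemma ctrl_obtain:
  assumes "exp_controlled p \<Sigma> (\<rho> :: (real^'n) measure)"
  shows "\<exists>x0. (\<integral>\<^sup>+\<theta>. ennreal (exp (norm (inv_sqrt_mat \<Sigma> *v (\<theta> - x0)) powr p)) \<partial>\<rho>) \<le> ennreal (11/10 * exp (real CARD('n)/2))"
proof -
  have "ennreal (exp (real CARD('n) / 2)) < ennreal (11/10 * exp (real CARD('n)/2))"
    by (intro ennreal_lessI) auto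
  with assms have "(INF \<theta>'. \<integral>\<^sup>+ \<theta>. ennreal (exp (norm (inv_sqrt_mat \<Sigma> *v (\<theta> - \<theta>')) powr p)) \<partial>\<rho>) < ennreal (11/10 * exp (real CARD('n)/2))"
    unfolding exp_controlled_def by (rule order.strict_trans1)
  then obtain x0 where "(\<integral>\<^sup>+ \<theta>. ennreal (exp (norm (inv_sqrt_mat \<Sigma> *v (\<theta> - x0)) powr p)) \<partial>\<rho>) < ennreal (11/10 * exp (real CARD('n)/2))"
    by (auto simp: INF_less_iff)
  then show ?thesis by (intro exI[of _ x0]) simp
qed

theorem mainTheorem3:
  fixes p :: real and \<Sigma> :: "real^'n^'n" and \<eta> \<zeta> :: "(real^'n) measure"
  assumes "p \<ge> 1"
    and "pos_def_mat \<Sigma>"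
    and "prob_space \<eta>" and "sets \<eta> = sets borel"
    and "prob_space \<zeta>" and "sets \<zeta> = sets borel"
    and "absolutely_continuous \<eta> \<zeta>" and "absolutely_continuous \<zeta> \<eta>"
    and "KL_finite \<zeta> \<eta>" and "KL_finite \<eta> \<zeta>"
    and "exp_controlled p \<Sigma> \<eta> \<or> exp_controlled p \<Sigma> \<zeta>"
  shows "wasserstein p \<Sigma> \<eta> \<zeta> \<le> ennreal ((3 + real CARD('n)) *
           (SKL \<zeta> \<eta> powr (1 / p) + (SKL \<zeta> \<eta> / 2) powr (1 / (2 * p))))"
proof -
  note p = assms(1) and Pe = assms(3) and Se = assms(4) and Pz = assms(5) and Sz = assms(6)
    and ac1 = assms(7) and ac2 = assms(8) and F1 = assms(9) and F2 = assms(10)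
  define S where "S = SKL \<zeta> \<eta>"
  define B where "B = 2 powr (p - 1) * ((3 + real CARD('n)) * (S + sqrt (S/2)))"
  have key: "wasserstein_pow p \<Sigma> \<eta> \<zeta> \<le> ennreal B \<and> 0 \<le> S"
  proof (cases "exp_controlled p \<Sigma> \<eta>")
    case True
    obtain x0 where Z: "(\<integral>\<^sup>+\<theta>. ennreal (exp (norm (inv_sqrt_mat \<Sigma> *v (\<theta> - x0)) powr p)) \<partial>\<eta>) \<le> ennreal (11/10 * exp (real CARD('n)/2))"
      using ctrl_obtain[OF True] by blast
    obtain f where fm: "f \<in> borel_measurable \<eta>" and f0: "\<forall>x. 0 \<le> f x" and zd: "\<zeta> = density \<eta> f"
      and fpos: "AE x in \<eta>. 0 < f x"
      and SS: "(\<integral>\<^sup>+x. ennreal ((f x - 1) * ln (f x)) \<partial>\<eta>) = ennreal (KL_divergence (exp 1) \<eta> \<zeta> + KL_divergence (exp 1) \<zeta> \<eta>)"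
      and S0: "0 \<le> KL_divergence (exp 1) \<eta> \<zeta> + KL_divergence (exp 1) \<zeta> \<eta>"
      using kl_part[OF Pe Pz _ ac1 ac2 F1[unfolded KL_finite_def] F2[unfolded KL_finite_def]] Se Sz by auto
    have SSe: "KL_divergence (exp 1) \<eta> \<zeta> + KL_divergence (exp 1) \<zeta> \<eta> = S" unfolding S_def SKL_def KL_def ..
    have fmb: "f \<in> borel_measurable borel" using fm by (simp add: measurable_cong_sets[OF Se refl])
    have "wasserstein_pow p \<Sigma> (density \<eta> (\<lambda>_. 1)) (density \<eta> f) \<le> ennreal B"
      unfolding B_def by (rule wp_bound(1)[OF Pe Se fmb _ fpos _ SS[unfolded SSe] S0[unfolded SSe] p Z])
        (use f0 Pz zd in auto)
    then show ?thesis using zd S0 SSe by (simp add: density_1)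
  next
    case False
    hence C: "exp_controlled p \<Sigma> \<zeta>" using assms(11) by simp
    obtain x0 where Z: "(\<integral>\<^sup>+\<theta>. ennreal (exp (norm (inv_sqrt_mat \<Sigma> *v (\<theta> - x0)) powr p)) \<partial>\<zeta>) \<le> ennreal (11/10 * exp (real CARD('n)/2))"
      using ctrl_obtain[OF C] by blast
    obtain f where fm: "f \<in> borel_measurable \<zeta>" and f0: "\<forall>x. 0 \<le> f x" and ed: "\<eta> = density \<zeta> f"
      and fpos: "AE x in \<zeta>. 0 < f x"
      and SS: "(\<integral>\<^sup>+x. ennreal ((f x - 1) * ln (f x)) \<partial>\<zeta>) = ennreal (KL_divergence (exp 1) \<zeta> \<eta> + KL_divergence (exp 1) \<eta> \<zeta>)"
      and S0: "0 \<le> KL_divergence (exp 1) \<zeta> \<eta> + KL_divergence (exp 1) \<eta> \<zeta>"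
      using kl_part[OF Pz Pe _ ac2 ac1 F2[unfolded KL_finite_def] F1[unfolded KL_finite_def]] Se Sz by auto
    have SSe: "KL_divergence (exp 1) \<zeta> \<eta> + KL_divergence (exp 1) \<eta> \<zeta> = S" unfolding S_def SKL_def KL_def by simp
    have fmb: "f \<in> borel_measurable borel" using fm by (simp add: measurable_cong_sets[OF Sz refl])
    have "wasserstein_pow p \<Sigma> (density \<zeta> f) (density \<zeta> (\<lambda>_. 1)) \<le> ennreal B"
      unfolding B_def by (rule wp_bound(2)[OF Pz Sz fmb _ fpos _ SS[unfolded SSe] S0[unfolded SSe] p Z])
        (use f0 Pe ed in auto)
    then show ?thesis using ed S0 SSe by (simp add: density_1)
  qed
  have S0: "0 \<le> S" using key by simp
  have B0: "0 \<le> B" unfolding B_def using S0 by simp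
  define W where "W = wasserstein_pow p \<Sigma> \<eta> \<zeta>"
  have WB: "W \<le> ennreal B" using key unfolding W_def by simp
  have Wfin: "W \<noteq> \<infinity>" using WB by (auto simp: top_unique)
  have WW: "W = ennreal (enn2real W)" using Wfin by (simp add: ennreal_enn2real_if)
  have wB: "enn2real W \<le> B" using WB B0 by (subst (asm) WW) (simp add: ennreal_le_iff)
  have "enn2real W powr (1/p) \<le> (3 + real CARD('n)) * (S powr (1/p) + (S/2) powr (1/(2*p)))"
    by (rule final_real[OF p _ S0 _ wB[unfolded B_def]]) auto
  then show ?thesis unfolding wasserstein_def W_def[symmetric] S_def[symmetric] using Wfin by (simp add: ennreal_leI)
qed

end
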